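(* Let $L\ge2$. Let $\mathcal{M}^*=(m_1^*,\dots,m_L^* )$ be a route with $m_1^*=1$ such that, for each $1\le k<L$, there is a unique nearest neighbor with respect to $(m_1^*,\dots,m_k^* )$ and $m_{k+1}^*$ is that nearest neighbor. Then every route $\mathcal{M}'=(1,m_2,\dots,m_L)$ of the same length $L$ satisfies $$R_{\mathrm{DF}}(\mathcal{M}^* )\ge R_{\mathrm{DF}}(\mathcal{M}').$$
   Context: Network: a finite set of nodes $\mathcal{S}=\{1,2,\dots,D\}$, $D\ge 2$. Node $1$ is the source and node $D$ is the destination. Received powers: for distinct nodes $i,t$, the power received at $t$ from $i$ is a positive real number $P_{it}$. All receivers have the same noise power $N>0$. Routes: a route is an ordered tuple of distinct nodes $\mathcal{M}=(m_1,\dots,m_L)$ with $m_1=1$ and $L\ge1$. DF with independent codewords: the reception rate of node $m_t$ ($2\le t\le L$) in route $\mathcal{M}$ is $$R_{m_t}(\mathcal{M})=\tfrac12\log\Big(1+N^{-1}\sum_{i=1}^{t-1}P_{m_i m_t}\Big).$$ The supported DF rate (for $L\ge2$) is $R_{\mathrm{DF}}(\mathcal{M})=\min_{2\le t\le L}R_{m_t}(\mathcal{M})$. Nearest neighbor: node $i\notin\mathcal{M}$ is a nearest neighbor with respect to route $\mathcal{M}$ iff $P_{mi}\ge P_{mj}$ for all $m\in\mathcal{M}$ and all $j\in\mathcal{S}\setminus(\mathcal{M}\cup\{i\})$. *)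

theory Defs
  imports Complex_Main
begin

text \<open>Nodes are the naturals 1..D; node 1 is the source. Received powers are
a function P :: nat => nat => real (P i t = power received at t from i), noise N.
A route is a list of nodes (index 0 is m_1).\<close>

definition nodes :: "nat \<Rightarrow> nat set" where
  "nodes D = {1..D}"

definition is_route :: "nat \<Rightarrow> nat list \<Rightarrow> bool" where
  "is_route D M \<longleftrightarrow> M \<noteq> [] \<and> hd M = 1 \<and> distinct M \<and> set M \<subseteq> nodes D"

text \<open>Reception rate of the node at (0-based) position t of route M, t >= 1.\<close>
definition rx_rate :: "(nat \<Rightarrow> nat \<Rightarrow> real) \<Rightarrow> real \<Rightarrow> nat list \<Rightarrow> nat \<Rightarrow> real" where
  "rx_rate P N M t = (1/2) * log 2 (1 + (\<Sum>i<t. P (M ! i) (M ! t)) / N)"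

definition R_DF :: "(nat \<Rightarrow> nat \<Rightarrow> real) \<Rightarrow> real \<Rightarrow> nat list \<Rightarrow> real" where
  "R_DF P N M = Min ((rx_rate P N M) ` {1..<length M})"

definition nearest_neighbor ::
  "nat \<Rightarrow> (nat \<Rightarrow> nat \<Rightarrow> real) \<Rightarrow> nat list \<Rightarrow> nat \<Rightarrow> bool" where
  "nearest_neighbor D P M i \<longleftrightarrow> i \<in> nodes D \<and> i \<notin> set M \<and>
     (\<forall>m\<in>set M. \<forall>j\<in>nodes D - (set M \<union> {i}). P m i \<ge> P m j)"

end

theory Submission
  imports Defs
begin

lemma sum_nth_set:
  assumes "distinct xs" "t \<le> length xs"
  shows "(\<Sum>i<t. f (xs ! i)) = (\<Sum>s\<in>set (take t xs). f s)"
proof -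
  have img: "set (take t xs) = (\<lambda>i. xs ! i) ` {..<t}"
    using nth_image[OF assms(2)] by (simp add: lessThan_atLeast0)
  have inj: "inj_on (\<lambda>i. xs ! i) {..<t}"
    using assms by (auto simp: inj_on_def nth_eq_iff_index_eq)
  show ?thesis unfolding img by (simp add: sum.reindex[OF inj])
qed

lemma key:
  fixes D L :: nat and P :: "nat \<Rightarrow> nat \<Rightarrow> real" and N :: real
    and Mstar M' :: "nat list"
  assumes "N > 0"
    and pos: "\<And>i t. i \<in> nodes D \<Longrightarrow> t \<in> nodes D \<Longrightarrow> i \<noteq> t \<Longrightarrow> P i t > 0"
    and rs: "is_route D Mstar" and ls: "length Mstar = L"
    and nn: "\<And>k. 1 \<le> k \<Longrightarrow> k < L \<Longrightarrow>
           (\<forall>i. nearest_neighbor D P (take k Mstar) i \<longleftrightarrow> i = Mstar ! k)"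
    and r': "is_route D M'" and l': "length M' = L"
    and t: "1 \<le> t" "t < L"
  shows "\<exists>t'. 1 \<le> t' \<and> t' < L \<and> rx_rate P N M' t' \<le> rx_rate P N Mstar t"
proof -
  define S where "S = set (take t Mstar)"
  have dS: "distinct Mstar" "hd Mstar = 1" "set Mstar \<subseteq> nodes D" "Mstar \<noteq> []"
    using rs by (auto simp: is_route_def)
  have d': "distinct M'" "hd M' = 1" "set M' \<subseteq> nodes D" "M' \<noteq> []"
    using r' by (auto simp: is_route_def)
  have cS: "card S = t" unfolding S_def using dS(1) t ls
    by (simp add: distinct_card)
  have c': "card (set (take (Suc t) M')) = Suc t" using d'(1) t l'
    by (simp add: distinct_card)
  have "\<not> set (take (Suc t) M') \<subseteq> S"
  proof
    assume "set (take (Suc t) M') \<subseteq> S"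
    from card_mono[OF _ this] have "Suc t \<le> t" using cS c' S_def by simp
    thus False by simp
  qed
  then obtain x where "x \<in> set (take (Suc t) M')" "x \<notin> S" by blast
  then obtain k where k: "k < Suc t" "M' ! k \<notin> S" using t l'
    by (auto simp: in_set_conv_nth)
  define t' where "t' = (LEAST k. M' ! k \<notin> S)"
  have t'1: "M' ! t' \<notin> S" unfolding t'_def by (rule LeastI, rule k(2))
  have t'le: "t' \<le> k" unfolding t'_def by (rule Least_le, rule k(2))
  have t'min: "\<And>i. i < t' \<Longrightarrow> M' ! i \<in> S" unfolding t'_def using not_less_Least by blast
  have m0: "M' ! 0 = 1" "Mstar ! 0 = 1" using d' dS by (auto simp: hd_conv_nth)
  have "take t Mstar ! 0 = 1" using t m0 by simp
  moreover have "0 < length (take t Mstar)" using t ls by simp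
  ultimately have "1 \<in> S" unfolding S_def by (metis nth_mem)
  hence "t' \<noteq> 0" using t'1 m0 by (metis)
  hence t'pos: "1 \<le> t'" by simp
  have t'L: "t' < L" using t'le k t by simp
  define y where "y = M' ! t'"
  have yn: "y \<in> nodes D" using d'(3) t'L l' y_def by auto
  have yS: "y \<notin> S" using t'1 y_def by simp
  have sub: "set (take t' M') \<subseteq> S" using t'min t'L l'
    by (auto simp: in_set_conv_nth)
  have Sn: "S \<subseteq> nodes D" unfolding S_def using dS(3) by (meson set_take_subset subset_trans)
  have s1: "(\<Sum>i<t'. P (M' ! i) (M' ! t')) = (\<Sum>s\<in>set (take t' M'). P s y)"
    using sum_nth_set[OF d'(1), of t' "\<lambda>s. P s y"] t'L l' y_def by simp
  have s2: "(\<Sum>i<t. P (Mstar ! i) (Mstar ! t)) = (\<Sum>s\<in>S. P s (Mstar ! t))"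
    using sum_nth_set[OF dS(1), of t "\<lambda>s. P s (Mstar ! t)"] t ls S_def by simp
  have nonneg: "\<And>s. s \<in> S \<Longrightarrow> 0 \<le> P s y"
    using pos yn Sn yS by (metis less_imp_le subsetD)
  have "(\<Sum>s\<in>set (take t' M'). P s y) \<le> (\<Sum>s\<in>S. P s y)"
    by (rule sum_mono2) (use sub nonneg in \<open>auto simp: S_def\<close>)
  also have "\<dots> \<le> (\<Sum>s\<in>S. P s (Mstar ! t))"
  proof (cases "y = Mstar ! t")
    case True thus ?thesis by simp
  next
    case False
    have "nearest_neighbor D P (take t Mstar) (Mstar ! t)" using nn t by blast
    hence "\<forall>m\<in>S. \<forall>j\<in>nodes D - (S \<union> {Mstar ! t}). P m (Mstar ! t) \<ge> P m j"
      unfolding nearest_neighbor_def S_def by blast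
    thus ?thesis using False yn yS by (intro sum_mono) auto
  qed
  finally have le: "(\<Sum>i<t'. P (M' ! i) (M' ! t')) \<le> (\<Sum>i<t. P (Mstar ! i) (Mstar ! t))"
    using s1 s2 by simp
  have nn0: "0 \<le> (\<Sum>i<t'. P (M' ! i) (M' ! t'))"
    using s1 by (metis nonneg sub subsetD sum_nonneg)
  have "(1 + (\<Sum>i<t'. P (M' ! i) (M' ! t')) / N) \<le> (1 + (\<Sum>i<t. P (Mstar ! i) (Mstar ! t)) / N)"
    using le \<open>N > 0\<close> by (simp add: divide_right_mono)
  moreover have "0 < 1 + (\<Sum>i<t'. P (M' ! i) (M' ! t')) / N" using nn0 \<open>N > 0\<close>
    by (smt (verit) divide_nonneg_pos)
  ultimately have "rx_rate P N M' t' \<le> rx_rate P N Mstar t"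
    unfolding rx_rate_def by simp
  thus ?thesis using t'pos t'L by blast
qed

theorem lemma3:
  fixes D L :: nat and P :: "nat \<Rightarrow> nat \<Rightarrow> real" and N :: real
    and Mstar M' :: "nat list"
  assumes "D \<ge> 2"
    and "N > 0"
    and "\<And>i t. i \<in> nodes D \<Longrightarrow> t \<in> nodes D \<Longrightarrow> i \<noteq> t \<Longrightarrow> P i t > 0"
    and "L \<ge> 2"
    and "is_route D Mstar" and "length Mstar = L"
    and "\<And>k. 1 \<le> k \<Longrightarrow> k < L \<Longrightarrow>
           (\<forall>i. nearest_neighbor D P (take k Mstar) i \<longleftrightarrow> i = Mstar ! k)"
    and "is_route D M'" and "length M' = L"
  shows "R_DF P N Mstar \<ge> R_DF P N M'"
proof -
  have ne: "{1..<L} \<noteq> {}" using assms(4) by auto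
  show ?thesis
    unfolding R_DF_def assms(6) assms(9)
  proof (rule Min.boundedI)
    show "finite (rx_rate P N Mstar ` {1..<L})" by simp
    show "rx_rate P N Mstar ` {1..<L} \<noteq> {}" using ne by simp
  next
    fix a assume "a \<in> rx_rate P N Mstar ` {1..<L}"
    then obtain t where t: "1 \<le> t" "t < L" "a = rx_rate P N Mstar t" by auto
    obtain t' where t': "1 \<le> t'" "t' < L" "rx_rate P N M' t' \<le> a"
      using key[OF assms(2,3,5,6,7,8,9) t(1,2)] t(3) by blast
    have "Min (rx_rate P N M' ` {1..<L}) \<le> rx_rate P N M' t'"
      by (rule Min_le) (use t' in auto)
    thus "Min (rx_rate P N M' ` {1..<L}) \<le> a" using t'(3) by linarith
  qed
qed

end
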